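(* Consider U-PB$(\hat x_0,\chi,\lambda_0,\bar\varepsilon,\overline N)$ described in the context. Let $j$ be an iteration of a cycle with prox stepsize $\lambda$ and first iteration $i$, and suppose $t_j>(1-\chi)\bar\varepsilon/2$. Then \[ j-i<(1+u_\lambda)\log\left(\frac{4t_i}{(1-\chi)\bar\varepsilon}\right),\qquad u_\lambda:=\frac{4\lambda[2M_f^2+(1-\chi)\bar\varepsilon L_f]}{(1-\chi)\bar\varepsilon}. \]
   Context: Setting: $f,h:\mathbb{R}^n\to\mathbb{R}\cup\{+\infty\}$ proper lsc convex, $\mathrm{dom}\, h\subseteq\mathrm{dom}\, f$, $\phi=f+h$, $\phi_*=\inf\phi$ attained. Subgradient oracle $f'(x)\in\partial f(x)$ on $\mathrm{dom}\, h$ with $\|f'(x)-f'(y)\|\le2M_f+L_f\|x-y\|$ for $x,y\in\mathrm{dom}\, h$, $M_f,L_f\ge0$. $\ell_f(u;x):=f(x)+\langle f'(x),u-x\rangle$. "Convex function" means proper lsc convex on $\mathbb{R}^n$. BU$(x^c,x,m_f,\lambda)$: given $\lambda>0$, convex $m_f\le f$ with $x=\mathrm{argmin}_u\{m_f(u)+h(u)+\frac1{2\lambda}\|u-x^c\|^2\}$, outputs any convex $m_f^+$ with $\max\{\overline m_f,\ell_f(\cdot;x)\}\le m_f^+\le f$, where $\overline m_f\le f$, $\overline m_f(x)=m_f(x)$ and $x=\mathrm{argmin}_u\{\overline m_f(u)+h(u)+\frac1{2\lambda}\|u-x^c\|^2\}$. U-PB$(\hat x_0,\chi,\lambda_0,\bar\varepsilon,\overline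 N)$, inputs in $\mathrm{dom}\, h\times[0,1)\times\mathbb{R}_{++}\times\mathbb{R}_{++}\times\{1,2,\ldots\}$: Step 0: $\lambda=\lambda_0$, $N=0$, $j=1$, $k=1$; choose convex $f_1$ with $\ell_f(\cdot;\hat x_0)\le f_1\le f$. Step 1: $x_j=\mathrm{argmin}_u\{(f_j+h)(u)+\frac1{2\lambda}\|u-\hat x_{k-1}\|^2\}$; if $\phi(x_j)-\phi_*\le\bar\varepsilon$ stop. Step 2: $\bar\phi_j=\phi(x_j)+\frac\chi{2\lambda}\|x_j-\hat x_{k-1}\|^2$ if $N=0$, else $\bar\phi_j=\min\{\bar\phi_{j-1},\phi(x_j)+\frac\chi{2\lambda}\|x_j-\hat x_{k-1}\|^2\}$; $N=N+1$; $t_j=\bar\phi_j-[(f_j+h)(x_j)+\frac1{2\lambda}\|x_j-\hat x_{k-1}\|^2]$. Step 3: if $t_j>(1-\chi)\bar\varepsilon/2$ and $N<\overline N$: null update $f_{j+1}=\mathrm{BU}(\hat x_{k-1},x_j,f_j,\lambda)$. Otherwise: if $t_j>(1-\chi)\bar\varepsilon/2$ and $N=\overline N$, reset update $\lambda\leftarrow\lambda/2$; else serious update $\hat x_k=x_j$, $\lambda_k=\lambda$, $k\leftarrow k+1$; then set $N=0$ and choose convex $f_{j+1}$ with $\ell_f(\cdot;\hat x_{k-1})\le f_{j+1}\le f$. Step 4: $j\leftarrow j+1$, go to Step 1. A cycle is a reset or serious iteration together with all consecutive null iterations immediately preceding it; its iterations share the same prox stepsize $\lambda$ and prox-center $\hat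 x_{k-1}$, and its first iteration is the one at which $N=0$ when entering Step 2. *)

theory Defs
  imports "HOL-Analysis.Analysis" "HOL-Library.Extended_Real"
begin

text \<open>Extended-real-valued functions on a Euclidean space 'a (= R^n).
  The value \<infinity> represents +\<infinity> (outside the effective domain).\<close>

definition proper_fun :: "('a \<Rightarrow> ereal) \<Rightarrow> bool" where
  "proper_fun F \<longleftrightarrow> (\<forall>x. F x \<noteq> -\<infinity>) \<and> (\<exists>x. F x \<noteq> \<infinity>)"

definition convex_ext :: "('a::real_vector \<Rightarrow> ereal) \<Rightarrow> bool" where
  "convex_ext F \<longleftrightarrow> (\<forall>x y t. 0 \<le> t \<and> t \<le> 1 \<longrightarrow>
      F ((1 - t) *\<^sub>R x + t *\<^sub>R y) \<le> ereal (1 - t) * F x + ereal t * F y)"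

definition lsc_fun :: "('a::topological_space \<Rightarrow> ereal) \<Rightarrow> bool" where
  "lsc_fun F \<longleftrightarrow> (\<forall>x c. c < F x \<longrightarrow> eventually (\<lambda>y. c < F y) (at x))"

definition cvx_fun :: "('a::euclidean_space \<Rightarrow> ereal) \<Rightarrow> bool" where
  "cvx_fun F \<longleftrightarrow> proper_fun F \<and> convex_ext F \<and> lsc_fun F"

definition edom :: "('a \<Rightarrow> ereal) \<Rightarrow> 'a set" where
  "edom F = {x. F x < \<infinity>}"

definition lin :: "('a::real_inner \<Rightarrow> ereal) \<Rightarrow> ('a \<Rightarrow> 'a) \<Rightarrow> 'a \<Rightarrow> 'a \<Rightarrow> ereal" where
  "lin f g x u = f x + ereal (inner (g x) (u - x))"

definition is_argmin :: "('a \<Rightarrow> ereal) \<Rightarrow> 'a \<Rightarrow> bool" where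
  "is_argmin F x \<longleftrightarrow> (\<forall>u. F x \<le> F u)"

definition proxobj :: "('a \<Rightarrow> ereal) \<Rightarrow> ('a \<Rightarrow> ereal) \<Rightarrow> 'a \<Rightarrow> real \<Rightarrow> 'a::real_normed_vector \<Rightarrow> ereal" where
  "proxobj m h xc lam u = m u + h u + ereal ((norm (u - xc))\<^sup>2 / (2 * lam))"

text \<open>Admissible outputs m' of BU(xc, x, m, lambda) (f, h, oracle g fixed).\<close>
definition BU :: "('a::euclidean_space \<Rightarrow> ereal) \<Rightarrow> ('a \<Rightarrow> ereal) \<Rightarrow> ('a \<Rightarrow> 'a)
    \<Rightarrow> 'a \<Rightarrow> 'a \<Rightarrow> ('a \<Rightarrow> ereal) \<Rightarrow> real \<Rightarrow> ('a \<Rightarrow> ereal) \<Rightarrow> bool" where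
  "BU f h g xc x m lam m' \<longleftrightarrow>
     cvx_fun m' \<and> (\<forall>u. m' u \<le> f u) \<and>
     (\<exists>mb. cvx_fun mb \<and> (\<forall>u. mb u \<le> f u) \<and> mb x = m x \<and>
           is_argmin (proxobj mb h xc lam) x \<and>
           (\<forall>u. max (mb u) (lin f g x u) \<le> m' u))"

text \<open>A run of U-PB(x0, chi, lam0, eps, Nbar) consisting of iterations 1..n (none of which stops).
  For iteration l: lam l = prox stepsize, xc l = prox center, NN l = value of N when entering Step 2
  (before the increment), fm l = model f_l, x l = x_l, phib l = \<bar>phi_l, t l = t_l.\<close>
definition upb_run :: "('a::euclidean_space \<Rightarrow> ereal) \<Rightarrow> ('a \<Rightarrow> ereal) \<Rightarrow> ('a \<Rightarrow> 'a)
    \<Rightarrow> 'a \<Rightarrow> real \<Rightarrow> real \<Rightarrow> real \<Rightarrow> nat \<Rightarrow> nat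
    \<Rightarrow> (nat \<Rightarrow> real) \<Rightarrow> (nat \<Rightarrow> 'a) \<Rightarrow> (nat \<Rightarrow> nat) \<Rightarrow> (nat \<Rightarrow> 'a \<Rightarrow> ereal)
    \<Rightarrow> (nat \<Rightarrow> 'a) \<Rightarrow> (nat \<Rightarrow> ereal) \<Rightarrow> (nat \<Rightarrow> ereal) \<Rightarrow> bool" where
  "upb_run f h g x0 chi lam0 eps Nbar n lam xc NN fm x phib t \<longleftrightarrow>
    (let phi = (\<lambda>u. f u + h u);
         phistar = (INF u. phi u);
         thr = ereal ((1 - chi) * eps / 2)
     in
     lam 1 = lam0 \<and> xc 1 = x0 \<and> NN 1 = 0 \<and>
     cvx_fun (fm 1) \<and> (\<forall>u. lin f g x0 u \<le> fm 1 u \<and> fm 1 u \<le> f u) \<and>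
     (\<forall>l\<in>{1..n}.
        is_argmin (proxobj (fm l) h (xc l) (lam l)) (x l) \<and>
        \<not> (phi (x l) - phistar \<le> ereal eps) \<and>
        phib l = (if NN l = 0
                  then phi (x l) + ereal (chi / (2 * lam l) * (norm (x l - xc l))\<^sup>2)
                  else min (phib (l - 1))
                           (phi (x l) + ereal (chi / (2 * lam l) * (norm (x l - xc l))\<^sup>2))) \<and>
        t l = phib l - proxobj (fm l) h (xc l) (lam l) (x l)) \<and>
     (\<forall>l\<in>{1..<n}.
        if t l > thr \<and> NN l + 1 < Nbar
        then \<comment> \<open>null update\<close>
          lam (l + 1) = lam l \<and> xc (l + 1) = xc l \<and> NN (l + 1) = NN l + 1 \<and>
          BU f h g (xc l) (x l) (fm l) (lam l) (fm (l + 1))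
        else
          (if t l > thr \<and> NN l + 1 = Nbar
           then lam (l + 1) = lam l / 2 \<and> xc (l + 1) = xc l   \<comment> \<open>reset update\<close>
           else lam (l + 1) = lam l \<and> xc (l + 1) = x l) \<and>  \<comment> \<open>serious update\<close>
          NN (l + 1) = 0 \<and> cvx_fun (fm (l + 1)) \<and>
          (\<forall>u. lin f g (xc (l + 1)) u \<le> fm (l + 1) u \<and> fm (l + 1) u \<le> f u)))"

definition null_iter :: "real \<Rightarrow> real \<Rightarrow> nat \<Rightarrow> (nat \<Rightarrow> nat) \<Rightarrow> (nat \<Rightarrow> ereal) \<Rightarrow> nat \<Rightarrow> bool" where
  "null_iter chi eps Nbar NN t l \<longleftrightarrow> t l > ereal ((1 - chi) * eps / 2) \<and> NN l + 1 < Nbar"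

end

theory Submission
  imports Defs
begin


lemma norm_comb:
  fixes p w :: "'a::real_inner"
  shows "(norm ((1-t) *\<^sub>R p + t *\<^sub>R w))\<^sup>2 = (1-t)*(norm p)\<^sup>2 + t*(norm w)\<^sup>2 - t*(1-t)*(norm (p-w))\<^sup>2"
  by (simp add: power2_norm_eq_inner inner_add_left inner_add_right inner_diff_left inner_diff_right inner_commute algebra_simps)

lemma strong_cvx_min:
  fixes F :: "'a::real_inner \<Rightarrow> real"
  assumes lam: "lam > 0"
  and mn: "\<And>t. 0 < t \<Longrightarrow> t \<le> 1 \<Longrightarrow> F x + (norm (x-c))\<^sup>2/(2*lam) \<le> F (x + t*\<^sub>R(u-x)) + (norm(x + t*\<^sub>R(u-x) - c))\<^sup>2/(2*lam)"
  and cvx: "\<And>t. 0 < t \<Longrightarrow> t \<le> 1 \<Longrightarrow> F (x + t*\<^sub>R(u-x)) \<le> (1-t)* F x + t * F u"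
  shows "F x + (norm (x-c))\<^sup>2/(2*lam) + (norm(u-x))\<^sup>2/(2*lam) \<le> F u + (norm(u-c))\<^sup>2/(2*lam)"
proof -
  define a where "a = F x + (norm (x-c))\<^sup>2/(2*lam)"
  define B where "B = F u + (norm(u-c))\<^sup>2/(2*lam)"
  define D where "D = (norm(u-x))\<^sup>2/(2*lam)"
  have D0: "D \<ge> 0" using lam by (simp add: D_def)
  have key: "a + (1-t)*D \<le> B" if t: "0 < t" "t \<le> 1" for t
  proof -
    have e: "x + t*\<^sub>R(u-x) - c = (1-t) *\<^sub>R (x-c) + t *\<^sub>R (u-c)"
      by (simp add: algebra_simps)
    have nm: "norm (x - u) = norm (u - x)" by (rule norm_minus_commute)
    have q: "(norm(x + t*\<^sub>R(u-x) - c))\<^sup>2/(2*lam) = (1-t)*((norm (x-c))\<^sup>2/(2*lam)) + t*((norm(u-c))\<^sup>2/(2*lam)) - t*(1-t)*D"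
      unfolding e norm_comb D_def using lam by (simp add: field_simps nm)
    have "a \<le> (1-t)*F x + t*F u + (1-t)*((norm (x-c))\<^sup>2/(2*lam)) + t*((norm(u-c))\<^sup>2/(2*lam)) - t*(1-t)*D"
      using mn[OF t] cvx[OF t] q unfolding a_def by linarith
    then have "a \<le> (1-t)*a + t*B - t*(1-t)*D" unfolding a_def B_def by (simp add: algebra_simps)
    then have "t*a \<le> t*B - t*((1-t)*D)" by (simp add: algebra_simps)
    then have "t*(a + (1-t)*D) \<le> t * B" by (simp add: algebra_simps)
    then show ?thesis using t by simp
  qed
  show ?thesis
  proof (rule ccontr)
    assume "\<not> ?thesis"
    then have gt: "a + D > B" unfolding a_def B_def D_def by linarith
    then have Dp: "D > 0" using key[of 1] by simp
    define t where "t = min 1 ((a + D - B)/(2*D))"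
    have t0: "0 < t" "t \<le> 1" using gt Dp by (auto simp: t_def)
    have "t \<le> (a+D-B)/(2*D)" by (simp add: t_def)
    then have "t*D \<le> (a+D-B)/(2*D)*D" using Dp by (intro mult_right_mono) auto
    also have "(a+D-B)/(2*D)*D = (a+D-B)/2" using Dp by simp
    finally have "t*D \<le> (a+D-B)/2" .
    then have "a + (1-t)*D > B" using gt by (simp add: algebra_simps)
    then show False using key[OF t0] by linarith
  qed
qed


lemma cvx_seg:
  fixes F :: "'a::euclidean_space \<Rightarrow> ereal"
  assumes "cvx_fun F" "F x < \<infinity>" "F u < \<infinity>" "0 \<le> t" "t \<le> 1"
  shows "F (x + t*\<^sub>R(u-x)) < \<infinity> \<and> real_of_ereal (F (x + t*\<^sub>R(u-x))) \<le> (1-t)*real_of_ereal (F x) + t*real_of_ereal (F u)"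
proof -
  have pr: "\<And>z. F z \<noteq> -\<infinity>" and cv: "convex_ext F" using assms(1) by (auto simp: cvx_fun_def proper_fun_def)
  have e: "x + t*\<^sub>R(u-x) = (1 - t) *\<^sub>R x + t *\<^sub>R u" by (simp add: algebra_simps)
  obtain a where a: "F x = ereal a" using assms(2) pr[of x] by (cases "F x") auto
  obtain b where b: "F u = ereal b" using assms(3) pr[of u] by (cases "F u") auto
  have "F (x + t*\<^sub>R(u-x)) \<le> ereal (1-t) * F x + ereal t * F u"
    using cv assms(4,5) unfolding convex_ext_def e by blast
  then have le: "F (x + t*\<^sub>R(u-x)) \<le> ereal ((1-t)*a + t*b)" by (simp add: a b)
  then obtain c where c: "F (x + t*\<^sub>R(u-x)) = ereal c" using pr[of "x + t*\<^sub>R(u-x)"]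
    by (cases "F (x + t*\<^sub>R(u-x))") auto
  show ?thesis using le by (simp add: a b c)
qed

lemma sum_fin:
  fixes a b :: ereal
  assumes "a \<noteq> -\<infinity>" "b \<noteq> -\<infinity>" "a + b + ereal c < \<infinity>"
  shows "a < \<infinity> \<and> b < \<infinity>"
proof -
  have "a \<noteq> \<infinity>" using assms by (cases a; cases b) auto
  moreover have "b \<noteq> \<infinity>" using assms by (cases a; cases b) auto
  ultimately show ?thesis by simp
qed

lemma fin3:
  fixes a b :: ereal
  assumes "a \<noteq> -\<infinity>" "a < \<infinity>" "b \<noteq> -\<infinity>" "b < \<infinity>"
  shows "a + b + ereal c \<noteq> -\<infinity> \<and> a + b + ereal c < \<infinity>"
  using assms by (cases a; cases b) auto

lemma ereal_le_real:
  fixes a b :: ereal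
  assumes "a \<noteq> -\<infinity>" "a < \<infinity>" "b \<noteq> -\<infinity>" "b < \<infinity>" "a \<le> b"
  shows "real_of_ereal a \<le> real_of_ereal b"
  using assms by (cases a; cases b) auto

lemma prox_strong:
  fixes m h :: "'a::euclidean_space \<Rightarrow> ereal"
  assumes m: "cvx_fun m" and h: "cvx_fun h" and lam: "lam > 0" and am: "is_argmin (proxobj m h c lam) x"
   and fin: "m x < \<infinity>" "h x < \<infinity>" "m u < \<infinity>" "h u < \<infinity>"
  shows "real_of_ereal (m x) + real_of_ereal (h x) + (norm (x-c))\<^sup>2/(2*lam) + (norm(u-x))\<^sup>2/(2*lam)
     \<le> real_of_ereal (m u) + real_of_ereal (h u) + (norm(u-c))\<^sup>2/(2*lam)"
proof -
  have pm: "\<And>z. m z \<noteq> -\<infinity>" using m by (auto simp: cvx_fun_def proper_fun_def)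
  have ph: "\<And>z. h z \<noteq> -\<infinity>" using h by (auto simp: cvx_fun_def proper_fun_def)
  have rm: "m z = ereal (real_of_ereal (m z))" if "m z < \<infinity>" for z using that pm[of z] by (cases "m z") auto
  have rh: "h z = ereal (real_of_ereal (h z))" if "h z < \<infinity>" for z using that ph[of z] by (cases "h z") auto
  define F where "F z = real_of_ereal (m z) + real_of_ereal (h z)" for z
  show ?thesis
    unfolding F_def[symmetric] add.assoc[symmetric]
  proof (rule strong_cvx_min[OF lam])
    fix t :: real assume t: "0 < t" "t \<le> 1"
    have sm: "m (x + t*\<^sub>R(u-x)) < \<infinity>" "real_of_ereal (m (x + t*\<^sub>R(u-x))) \<le> (1-t)*real_of_ereal (m x) + t*real_of_ereal (m u)"
      using cvx_seg[OF m fin(1,3), of t] t by auto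
    have sh: "h (x + t*\<^sub>R(u-x)) < \<infinity>" "real_of_ereal (h (x + t*\<^sub>R(u-x))) \<le> (1-t)*real_of_ereal (h x) + t*real_of_ereal (h u)"
      using cvx_seg[OF h fin(2,4), of t] t by auto
    show "F (x + t*\<^sub>R(u-x)) \<le> (1-t) * F x + t * F u"
      using sm(2) sh(2) unfolding F_def by (simp add: algebra_simps)
    have "proxobj m h c lam x \<le> proxobj m h c lam (x + t*\<^sub>R(u-x))" using am unfolding is_argmin_def by blast
    then show "F x + (norm (x-c))\<^sup>2/(2*lam) \<le> F (x + t*\<^sub>R(u-x)) + (norm(x + t*\<^sub>R(u-x) - c))\<^sup>2/(2*lam)"
      unfolding proxobj_def F_def
      apply (subst (asm) rm[OF fin(1)], subst (asm) rh[OF fin(2)], subst (asm) rm[OF sm(1)], subst (asm) rh[OF sh(1)])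
      by simp
  qed
qed


lemma step_arith:
  fixes lam Mf Lf d r Pl Pl1 Ml Ml1 F1 mby Lin fy hy qy chi u :: real
  assumes lam: "lam > 0" and d: "d > 0" and M: "Mf \<ge> 0" and L: "Lf \<ge> 0" and r: "r \<ge> 0"
   and chi: "chi \<le> 1" and qy: "qy \<ge> 0"
   and u_def: "u = 4 * lam * (2 * Mf\<^sup>2 + d * Lf) / d"
   and A: "mby + hy + qy \<ge> Ml + r\<^sup>2/(2*lam)"
   and F1a: "F1 \<ge> mby" and F1b: "F1 \<ge> Lin"
   and Ml1: "Ml1 = F1 + hy + qy"
   and C: "fy \<le> Lin + 2*Mf*r + Lf*r\<^sup>2"
   and P1: "Pl1 \<le> Pl" and P2: "Pl1 \<le> fy + hy + chi*qy"
  shows "Pl1 - Ml1 \<le> (u/(1+u))*(Pl - Ml) + (1 - u/(1+u))*(d/4)"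
proof -
  have u0: "u \<ge> 0" unfolding u_def using lam d M L by simp
  define al where "al = 1/(1+u)"
  have al0: "al > 0" "al \<le> 1" using u0 by (auto simp: al_def)
  have tau: "u/(1+u) = 1 - al" "1 - al = al*u" using u0 by (auto simp: al_def field_simps)
  have h1: "F1 \<ge> (1-al)*mby + al*Lin"
  proof -
    have "(1-al)*mby \<le> (1-al)*F1" using F1a al0 by (intro mult_left_mono) auto
    moreover have "al*Lin \<le> al*F1" using F1b al0 by (intro mult_left_mono) auto
    ultimately show ?thesis by (simp add: algebra_simps)
  qed
  have h2a: "Ml1 \<ge> (1-al)*(mby+hy+qy) + al*(Lin+hy+qy)" using h1 Ml1 by (simp add: algebra_simps)
  have h2b: "(1-al)*(mby+hy+qy) \<ge> (1-al)*(Ml + r\<^sup>2/(2*lam))" using A al0 by (intro mult_left_mono) auto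
  have "chi*qy \<le> qy" using mult_right_mono[OF chi qy] by simp
  then have "Lin+hy+qy \<ge> Pl1 - 2*Mf*r - Lf*r\<^sup>2" using C P2 by linarith
  then have h2c: "al*(Lin+hy+qy) \<ge> al*(Pl1 - 2*Mf*r - Lf*r\<^sup>2)" using al0 by (intro mult_left_mono) auto
  have h3: "2*Mf*r + Lf*r\<^sup>2 - u*r\<^sup>2/(2*lam) \<le> d/4"
  proof -
    have e: "u*r\<^sup>2/(2*lam) = 4*Mf\<^sup>2*r\<^sup>2/d + 2*Lf*r\<^sup>2" unfolding u_def using lam d by (simp add: field_simps power2_eq_square)
    have eq: "d*(d/4 - 2*Mf*r + 4*Mf\<^sup>2*r\<^sup>2/d) = (d/2 - 2*Mf*r)\<^sup>2"
      using d by (simp add: field_simps power2_eq_square)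
    have "0 \<le> (d/2 - 2*Mf*r)\<^sup>2" by simp
    then have "0 \<le> d*(d/4 - 2*Mf*r + 4*Mf\<^sup>2*r\<^sup>2/d)" unfolding eq .
    then have "0 \<le> d/4 - 2*Mf*r + 4*Mf\<^sup>2*r\<^sup>2/d" using d by (simp add: zero_le_mult_iff)
    moreover have "Lf*r\<^sup>2 \<ge> 0" using L by simp
    ultimately show ?thesis unfolding e by linarith
  qed
  have h4: "Pl1 - Ml1 \<le> (1-al)*(Pl1-Ml) + al*(2*Mf*r + Lf*r\<^sup>2 - u*r\<^sup>2/(2*lam))"
  proof -
    have e1: "(1-al)*(Ml + r\<^sup>2/(2*lam)) = (1-al)*Ml + al*(u*r\<^sup>2/(2*lam))"
    proof -
      have "(1-al)*(r\<^sup>2/(2*lam)) = al*(u*r\<^sup>2/(2*lam))" unfolding tau(2) by simp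
      then show ?thesis by (simp add: distrib_left)
    qed
    have e2: "al*(Pl1 - 2*Mf*r - Lf*r\<^sup>2) = al*Pl1 - al*(2*Mf*r + Lf*r\<^sup>2)" by (simp add: algebra_simps)
    have e3: "(1-al)*(Pl1-Ml) = Pl1 - al*Pl1 - (1-al)*Ml" by (simp add: algebra_simps)
    have e4: "al*(2*Mf*r + Lf*r\<^sup>2 - u*r\<^sup>2/(2*lam)) = al*(2*Mf*r + Lf*r\<^sup>2) - al*(u*r\<^sup>2/(2*lam))"
      by (simp add: algebra_simps)
    show ?thesis using h2a h2b h2c e1 e2 e3 e4 by argo
  qed
  have "(1-al)*(Pl1-Ml) \<le> (1-al)*(Pl-Ml)" using P1 al0 by (intro mult_left_mono) auto
  moreover have "al*(2*Mf*r + Lf*r\<^sup>2 - u*r\<^sup>2/(2*lam)) \<le> al*(d/4)" using h3 al0 by (intro mult_left_mono) auto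
  ultimately show ?thesis using h4 unfolding tau(1) by (simp add: al_def)
qed

lemma final_arith:
  fixes k :: nat and tau T0 d u :: real
  assumes u: "u \<ge> 0" and tau: "tau = u/(1+u)" and d: "d > 0" and T0: "T0 > d/2"
   and main: "k > 0 \<Longrightarrow> d/4 < tau^k * T0"
  shows "real k < (1+u) * ln (4*T0/d)"
proof -
  have "4*T0/d > 1" using T0 d by (simp add: field_simps)
  then have L: "ln (4*T0/d) > 0" by simp
  show ?thesis
  proof (cases "k = 0")
    case True then show ?thesis using L u by simp
  next
    case False
    then have m: "d/4 < tau^k * T0" using main by simp
    have t0: "tau \<ge> 0" using tau u by simp
    have tp: "tau > 0"
    proof (rule ccontr)
      assume "\<not> tau > 0" then have "tau = 0" using t0 by simp
      then show False using m False d by (simp add: zero_power)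
    qed
    have T0p: "T0 > 0" using T0 d by simp
    have "ln (d/4) < ln (tau^k * T0)" using m d by simp
    also have "ln (tau^k * T0) = real k * ln tau + ln T0" using tp T0p by (simp add: ln_mult ln_realpow)
    finally have "real k * (- ln tau) < ln T0 - ln (d/4)" by simp
    also have "ln T0 - ln (d/4) = ln (4*T0/d)" using T0p d by (simp add: ln_div ln_mult)
    finally have a: "real k * (- ln tau) < ln (4*T0/d)" .
    have "ln tau \<le> tau - 1" using tp by (rule ln_le_minus_one)
    moreover have "1 - tau = 1/(1+u)" using tau u by (simp add: field_simps)
    ultimately have "1/(1+u) \<le> - ln tau" by linarith
    then have "real k * (1/(1+u)) \<le> real k * (- ln tau)" by (intro mult_left_mono) auto
    then have "real k / (1+u) < ln (4*T0/d)" using a by simp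
    then show ?thesis using u by (simp add: field_simps)
  qed
qed

theorem lemma4p2:
  fixes f h :: "'a::euclidean_space \<Rightarrow> ereal" and g :: "'a \<Rightarrow> 'a"
    and Mf Lf chi lam0 eps :: real and x0 :: 'a and Nbar n i j m :: nat
    and lam :: "nat \<Rightarrow> real" and xc :: "nat \<Rightarrow> 'a" and NN :: "nat \<Rightarrow> nat"
    and fm :: "nat \<Rightarrow> 'a \<Rightarrow> ereal" and x :: "nat \<Rightarrow> 'a" and phib t :: "nat \<Rightarrow> ereal"
  assumes f_cvx: "cvx_fun f" and h_cvx: "cvx_fun h"
    and dom_sub: "edom h \<subseteq> edom f"
    and attained: "\<exists>xs. \<forall>u. f xs + h xs \<le> f u + h u"
    and subgrad: "\<And>u y. u \<in> edom h \<Longrightarrow> f u + ereal (inner (g u) (y - u)) \<le> f y"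
    and Mf: "Mf \<ge> 0" and Lf: "Lf \<ge> 0"
    and lipg: "\<And>u v. u \<in> edom h \<Longrightarrow> v \<in> edom h \<Longrightarrow> norm (g u - g v) \<le> 2 * Mf + Lf * norm (u - v)"
    and x0: "x0 \<in> edom h" and chi: "0 \<le> chi" "chi < 1" and lam0: "lam0 > 0"
    and eps: "eps > 0" and Nbar: "Nbar \<ge> 1"
    and run: "upb_run f h g x0 chi lam0 eps Nbar n lam xc NN fm x phib t"
    \<comment> \<open>{i..m} is a cycle: i is its first iteration, i..m-1 are null, m is a reset or serious iteration\<close>
    and cyc: "1 \<le> i" "i \<le> j" "j \<le> m" "m \<le> n" "NN i = 0"
      "\<forall>l\<in>{i..<m}. null_iter chi eps Nbar NN t l" "\<not> null_iter chi eps Nbar NN t m"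
    and tj: "t j > ereal ((1 - chi) * eps / 2)"
  shows "real (j - i) < (1 + 4 * lam j * (2 * Mf\<^sup>2 + (1 - chi) * eps * Lf) / ((1 - chi) * eps))
                        * ln (4 * real_of_ereal (t i) / ((1 - chi) * eps))"
  proof -
  define d where "d = (1 - chi) * eps"
  have d0: "d > 0" using chi eps by (simp add: d_def)
  have thr_eq: "ereal ((1 - chi) * eps / 2) = ereal (d/2)" by (simp add: d_def)
  have R1: "lam 1 = lam0" "NN 1 = 0" "cvx_fun (fm 1)" "\<And>u. fm 1 u \<le> f u"
    using run unfolding upb_run_def Let_def by auto
  have Rl: "\<And>l. l \<in> {1..n} \<Longrightarrow> is_argmin (proxobj (fm l) h (xc l) (lam l)) (x l) \<and>
        phib l = (if NN l = 0 then f (x l) + h (x l) + ereal (chi / (2 * lam l) * (norm (x l - xc l))\<^sup>2)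
                  else min (phib (l - 1)) (f (x l) + h (x l) + ereal (chi / (2 * lam l) * (norm (x l - xc l))\<^sup>2))) \<and>
        t l = phib l - proxobj (fm l) h (xc l) (lam l) (x l)"
    using run unfolding upb_run_def Let_def by auto
  have Rs: "\<And>l. l \<in> {1..<n} \<Longrightarrow> (if t l > ereal ((1 - chi) * eps / 2) \<and> NN l + 1 < Nbar
        then lam (l + 1) = lam l \<and> xc (l + 1) = xc l \<and> NN (l + 1) = NN l + 1 \<and>
          BU f h g (xc l) (x l) (fm l) (lam l) (fm (l + 1))
        else (if t l > ereal ((1 - chi) * eps / 2) \<and> NN l + 1 = Nbar
           then lam (l + 1) = lam l / 2 \<and> xc (l + 1) = xc l
           else lam (l + 1) = lam l \<and> xc (l + 1) = x l) \<and>
          NN (l + 1) = 0 \<and> cvx_fun (fm (l + 1)) \<and>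
          (\<forall>u. lin f g (xc (l + 1)) u \<le> fm (l + 1) u \<and> fm (l + 1) u \<le> f u))"
    using run unfolding upb_run_def Let_def by blast
  have FM: "cvx_fun (fm l) \<and> (\<forall>u. fm l u \<le> f u)" if l: "l \<in> {1..n}" for l
  proof (cases "l = 1")
    case True then show ?thesis using R1 by auto
  next
    case False
    define k where "k = l - 1"
    have k: "k \<in> {1..<n}" and lk: "l = k + 1" using l False by (auto simp: k_def)
    have "cvx_fun (fm (k+1)) \<and> (\<forall>u. fm (k+1) u \<le> f u)"
      using Rs[OF k] by (auto simp: BU_def split: if_splits)
    then show ?thesis using lk by simp
  qed
  have LAM: "l \<in> {1..n} \<Longrightarrow> lam l > 0" for l
  proof (induction l)
    case 0 then show ?case by simp
  next
    case (Suc k)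
    show ?case
    proof (cases "k = 0")
      case True then show ?thesis using R1 lam0 by simp
    next
      case False
      then have k: "k \<in> {1..<n}" using Suc.prems by auto
      then have "lam k > 0" using Suc.IH by auto
      then show ?thesis using Rs[OF k] by (auto split: if_splits)
    qed
  qed
  have pf: "\<And>z. f z \<noteq> -\<infinity>" using f_cvx by (auto simp: cvx_fun_def proper_fun_def)
  have ph: "\<And>z. h z \<noteq> -\<infinity>" using h_cvx by (auto simp: cvx_fun_def proper_fun_def)
  have pfm: "\<And>z. fm l z \<noteq> -\<infinity>" if "l \<in> {1..n}" for l
    using FM[OF that] by (auto simp: cvx_fun_def proper_fun_def)
  obtain u0 where u0: "h u0 \<noteq> \<infinity>" using h_cvx by (auto simp: cvx_fun_def proper_fun_def)
  have hu0: "h u0 < \<infinity>" using u0 by (simp add: less_top)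
  have fu0: "f u0 < \<infinity>" using dom_sub hu0 by (auto simp: edom_def)
  have DOM: "h (x l) < \<infinity> \<and> fm l (x l) < \<infinity>" if l: "l \<in> {1..n}" for l
  proof -
    have "fm l u0 < \<infinity>" using FM[OF l] fu0 by (meson order.strict_trans1)
    then have "proxobj (fm l) h (xc l) (lam l) u0 < \<infinity>" using hu0 unfolding proxobj_def by simp
    moreover have "proxobj (fm l) h (xc l) (lam l) (x l) \<le> proxobj (fm l) h (xc l) (lam l) u0"
      using Rl[OF l] unfolding is_argmin_def by blast
    ultimately have "proxobj (fm l) h (xc l) (lam l) (x l) < \<infinity>" by (meson le_less_trans)
    then show ?thesis using sum_fin[OF pfm[OF l] ph] unfolding proxobj_def by blast
  qed
  have FX: "f (x l) < \<infinity>" if l: "l \<in> {1..n}" for l using dom_sub DOM[OF l] by (auto simp: edom_def)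
  have rl: "a = ereal (real_of_ereal a)" if "a \<noteq> -\<infinity>" "a < \<infinity>" for a :: ereal
    using that by (cases a) auto
  have NULL: "lam (l+1) = lam l \<and> xc (l+1) = xc l \<and> NN (l+1) = NN l + 1 \<and>
      BU f h g (xc l) (x l) (fm l) (lam l) (fm (l+1)) \<and> t l > ereal (d/2)" if l: "l \<in> {i..<m}" for l
  proof -
    have nl: "null_iter chi eps Nbar NN t l" using cyc(6) l by blast
    have "l \<in> {1..<n}" using l cyc by auto
    from Rs[OF this] nl show ?thesis unfolding null_iter_def thr_eq by simp
  qed
  have CONST: "lam (i+k) = lam i \<and> xc (i+k) = xc i" if "i + k \<le> j" for k
    using that
  proof (induction k)
    case 0 then show ?case by simp
  next
    case (Suc k)
    then have "i + k \<in> {i..<m}" using cyc by auto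
    then show ?case using NULL[of "i+k"] Suc by simp
  qed
  define PM where "PM l = real_of_ereal (fm l (x l)) + real_of_ereal (h (x l)) + (norm (x l - xc l))\<^sup>2 / (2 * lam l)" for l
  have PMe: "proxobj (fm l) h (xc l) (lam l) (x l) = ereal (PM l)" if l: "l \<in> {1..n}" for l
    using DOM[OF l] pfm[OF l] ph unfolding proxobj_def PM_def
    by (subst rl[of "fm l (x l)"], simp_all, subst rl[of "h (x l)"], simp_all)
  define E where "E l = f (x l) + h (x l) + ereal (chi / (2 * lam l) * (norm (x l - xc l))\<^sup>2)" for l
  have finE: "E l \<noteq> -\<infinity> \<and> E l < \<infinity>" if l: "l \<in> {1..n}" for l
    unfolding E_def by (rule fin3[OF pf[of "x l"] FX[OF l] ph[of "x l"] conjunct1[OF DOM[OF l]]])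
  have phibE: "phib l = (if NN l = 0 then E l else min (phib (l - 1)) (E l))" if l: "l \<in> {1..n}" for l
    unfolding E_def by (rule conjunct1[OF conjunct2[OF Rl[OF l]]])
  have PHIB: "phib (i+k) \<noteq> -\<infinity> \<and> phib (i+k) < \<infinity>" if "i + k \<le> j" for k
    using that
  proof (induction k)
    case 0
    have l: "i \<in> {1..n}" using cyc by auto
    have "phib i = E i" using phibE[OF l] cyc(5) by simp
    then show ?case using finE[OF l] by simp
  next
    case (Suc k)
    have lk: "i + k \<in> {i..<m}" using Suc cyc by auto
    have l: "i + k + 1 \<in> {1..n}" using Suc cyc by auto
    have nn: "NN (i + k + 1) \<noteq> 0" using NULL[OF lk] by simp
    have eq: "phib (i + Suc k) = min (phib (i+k)) (E (i+k+1))" using phibE[OF l] nn by simp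
    have A: "phib (i+k) \<noteq> -\<infinity> \<and> phib (i+k) < \<infinity>" using Suc by simp
    show ?case unfolding eq using A finE[OF l] by (auto simp: min_def)
  qed
  define T where "T l = real_of_ereal (t l)" for l
  have TE: "t l = ereal (real_of_ereal (phib l) - PM l) \<and> T l = real_of_ereal (phib l) - PM l"
    if "i \<le> l" "l \<le> j" for l
  proof -
    have l: "l \<in> {1..n}" using that cyc by auto
    define k where "k = l - i"
    have k: "l = i + k" using that by (simp add: k_def)
    have "phib l \<noteq> -\<infinity> \<and> phib l < \<infinity>" using PHIB[of k] that k by simp
    then obtain p where pe: "phib l = ereal p" by (cases "phib l") auto
    have "t l = phib l - proxobj (fm l) h (xc l) (lam l) (x l)" by (rule conjunct2[OF conjunct2[OF Rl[OF l]]])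
    then have "t l = ereal (real_of_ereal (phib l) - PM l)" using PMe[OF l] pe by simp
    then show ?thesis unfolding T_def by simp
  qed
  define u where "u = 4 * lam j * (2 * Mf\<^sup>2 + d * Lf) / d"
  define tau where "tau = u/(1+u)"
  have u0: "u \<ge> 0" using LAM[of j] cyc d0 Mf Lf unfolding u_def by auto
  have tau0: "tau \<ge> 0" using u0 by (simp add: tau_def)
  have STEP: "T (l+1) \<le> tau * T l + (1 - tau) * (d/4)" if l1: "i \<le> l" "l < j" for l
  proof -
    have lk: "l \<in> {i..<m}" using l1 cyc by auto
    have l: "l \<in> {1..n}" and l2: "l+1 \<in> {1..n}" using l1 cyc by auto
    have N: "lam (l+1) = lam l" "xc (l+1) = xc l" "NN (l+1) = NN l + 1"
      "BU f h g (xc l) (x l) (fm l) (lam l) (fm (l+1))" using NULL[OF lk] by auto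
    have lamj: "lam l = lam j"
      using CONST[of "l - i"] CONST[of "j - i"] l1 by simp
    have lp: "lam l > 0" using LAM[OF l] .
    obtain mb where mb: "cvx_fun mb" "\<And>u. mb u \<le> f u" "mb (x l) = fm l (x l)"
      "is_argmin (proxobj mb h (xc l) (lam l)) (x l)"
      "\<And>u. max (mb u) (lin f g (x l) u) \<le> fm (l+1) u"
      using N(4) unfolding BU_def by blast
    have pmb: "\<And>z. mb z \<noteq> -\<infinity>" using mb(1) by (auto simp: cvx_fun_def proper_fun_def)
    have fx: "f (x l) \<noteq> -\<infinity>" "f (x l) < \<infinity>" using pf FX[OF l] by auto
    have fy: "f (x (l+1)) \<noteq> -\<infinity>" "f (x (l+1)) < \<infinity>" using pf FX[OF l2] by auto
    have hx: "h (x l) \<noteq> -\<infinity>" "h (x l) < \<infinity>" using ph DOM[OF l] by auto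
    have hy: "h (x (l+1)) \<noteq> -\<infinity>" "h (x (l+1)) < \<infinity>" using ph DOM[OF l2] by auto
    have fmx: "fm l (x l) \<noteq> -\<infinity>" "fm l (x l) < \<infinity>" using pfm[OF l] DOM[OF l] by auto
    have fmy: "fm (l+1) (x (l+1)) \<noteq> -\<infinity>" "fm (l+1) (x (l+1)) < \<infinity>" using pfm[OF l2] DOM[OF l2] by auto
    have mbx: "mb (x l) \<noteq> -\<infinity>" "mb (x l) < \<infinity>" using fmx mb(3) by auto
    have mby: "mb (x (l+1)) \<noteq> -\<infinity>" "mb (x (l+1)) < \<infinity>" using pmb mb(2)[of "x (l+1)"] fy(2)
      by (auto intro: le_less_trans)
    have strong: "real_of_ereal (mb (x l)) + real_of_ereal (h (x l)) + (norm (x l - xc l))\<^sup>2/(2*lam l)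
        + (norm (x (l+1) - x l))\<^sup>2/(2*lam l)
      \<le> real_of_ereal (mb (x (l+1))) + real_of_ereal (h (x (l+1))) + (norm (x (l+1) - xc l))\<^sup>2/(2*lam l)"
      by (rule prox_strong[OF mb(1) h_cvx lp mb(4) mbx(2) hx(2) mby(2) hy(2)])
    have A: "real_of_ereal (mb (x (l+1))) + real_of_ereal (h (x (l+1))) + (norm (x (l+1) - xc l))\<^sup>2/(2*lam l)
       \<ge> PM l + (norm (x (l+1) - x l))\<^sup>2/(2*lam l)"
      using strong mb(3) unfolding PM_def by simp
    have F1a: "real_of_ereal (fm (l+1) (x (l+1))) \<ge> real_of_ereal (mb (x (l+1)))"
      using mb(5)[of "x (l+1)"] by (intro ereal_le_real[OF mby fmy]) simp
    have linE: "lin f g (x l) (x (l+1)) = ereal (real_of_ereal (f (x l)) + inner (g (x l)) (x (l+1) - x l))"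
      using fx unfolding lin_def by (cases "f (x l)") auto
    have F1b: "real_of_ereal (fm (l+1) (x (l+1))) \<ge> real_of_ereal (f (x l)) + inner (g (x l)) (x (l+1) - x l)"
    proof -
      have "lin f g (x l) (x (l+1)) \<le> fm (l+1) (x (l+1))" using mb(5)[of "x (l+1)"] by simp
      then have "ereal (real_of_ereal (f (x l)) + inner (g (x l)) (x (l+1) - x l)) \<le> ereal (real_of_ereal (fm (l+1) (x (l+1))))"
        unfolding linE using fmy by (cases "fm (l+1) (x (l+1))") auto
      then show ?thesis by simp
    qed
    have Ml1: "PM (l+1) = real_of_ereal (fm (l+1) (x (l+1))) + real_of_ereal (h (x (l+1))) + (norm (x (l+1) - xc l))\<^sup>2/(2*lam l)"
      unfolding PM_def N(1) N(2) ..
    have yd: "x (l+1) \<in> edom h" using hy by (simp add: edom_def)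
    have xd: "x l \<in> edom h" using hx by (simp add: edom_def)
    have sg: "f (x (l+1)) + ereal (inner (g (x (l+1))) (x l - x (l+1))) \<le> f (x l)" using subgrad[OF yd] .
    then have sgr: "real_of_ereal (f (x (l+1))) + inner (g (x (l+1))) (x l - x (l+1)) \<le> real_of_ereal (f (x l))"
      using fx fy by (cases "f (x l)"; cases "f (x (l+1))") auto
    have lip: "norm (g (x (l+1)) - g (x l)) \<le> 2 * Mf + Lf * norm (x (l+1) - x l)" using lipg[OF yd xd] .
    have cs: "inner (g (x (l+1)) - g (x l)) (x (l+1) - x l) \<le> norm (g (x (l+1)) - g (x l)) * norm (x (l+1) - x l)"
      by (rule norm_cauchy_schwarz)
    also have "\<dots> \<le> (2 * Mf + Lf * norm (x (l+1) - x l)) * norm (x (l+1) - x l)"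
      using lip by (intro mult_right_mono) auto
    finally have cs2: "inner (g (x (l+1)) - g (x l)) (x (l+1) - x l) \<le> 2 * Mf * norm (x (l+1) - x l) + Lf * (norm (x (l+1) - x l))\<^sup>2"
      by (simp add: algebra_simps power2_eq_square)
    have ie: "inner (g (x (l+1))) (x l - x (l+1)) = - inner (g (x (l+1))) (x (l+1) - x l)"
      by (simp add: inner_diff_right)
    have C: "real_of_ereal (f (x (l+1))) \<le> (real_of_ereal (f (x l)) + inner (g (x l)) (x (l+1) - x l))
        + 2 * Mf * norm (x (l+1) - x l) + Lf * (norm (x (l+1) - x l))\<^sup>2"
      using sgr cs2 ie by (simp add: inner_diff_left)
    have pe: "phib (l+1) = min (phib l) (E (l+1))" using phibE[OF l2] N(3) by simp
    define k where "k = l - i"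
    have k: "l = i + k" using l1 by (simp add: k_def)
    have fpl: "phib l \<noteq> -\<infinity> \<and> phib l < \<infinity>" using PHIB[of k] k l1 by simp
    have fpl1: "phib (l+1) \<noteq> -\<infinity> \<and> phib (l+1) < \<infinity>" using PHIB[of "k+1"] k l1 by simp
    have fE: "E (l+1) \<noteq> -\<infinity> \<and> E (l+1) < \<infinity>" using finE[OF l2] .
    have P1: "real_of_ereal (phib (l+1)) \<le> real_of_ereal (phib l)"
      using fpl fpl1 pe by (intro ereal_le_real) auto
    have P2a: "real_of_ereal (phib (l+1)) \<le> real_of_ereal (E (l+1))"
      using fE fpl1 pe by (intro ereal_le_real) auto
    have Er: "real_of_ereal (E (l+1)) = real_of_ereal (f (x (l+1))) + real_of_ereal (h (x (l+1)))
        + chi * ((norm (x (l+1) - xc l))\<^sup>2 / (2 * lam l))"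
      unfolding E_def N(1) N(2) using fy hy by (cases "f (x (l+1))"; cases "h (x (l+1))") auto
    have P2: "real_of_ereal (phib (l+1)) \<le> real_of_ereal (f (x (l+1))) + real_of_ereal (h (x (l+1)))
        + chi * ((norm (x (l+1) - xc l))\<^sup>2 / (2 * lam l))" using P2a Er by simp
    have qy: "(norm (x (l+1) - xc l))\<^sup>2 / (2 * lam l) \<ge> 0" using lp by simp
    have ud: "u = 4 * lam l * (2 * Mf\<^sup>2 + d * Lf) / d" unfolding u_def lamj ..
    have key: "real_of_ereal (phib (l+1)) - PM (l+1) \<le> (u/(1+u)) * (real_of_ereal (phib l) - PM l) + (1 - u/(1+u))*(d/4)"
      by (rule step_arith[OF lp d0 Mf Lf norm_ge_zero less_imp_le[OF chi(2)] qy ud A F1a F1b Ml1 C P1 P2])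
    have "i \<le> l+1" "l+1 \<le> j" using l1 by auto
    then show ?thesis using key TE[of l] TE[of "l+1"] l1 unfolding tau_def by simp
  qed
  have CHAIN: "T (i+k) - d/4 \<le> tau^k * (T i - d/4)" if "i + k \<le> j" for k
    using that
  proof (induction k)
    case 0 then show ?case by simp
  next
    case (Suc k)
    have "T (i+k+1) \<le> tau * T (i+k) + (1 - tau) * (d/4)" using STEP[of "i+k"] Suc by simp
    moreover have "(1 - tau) * (d/4) = d/4 - tau*(d/4)" "tau * (T (i+k) - d/4) = tau * T (i+k) - tau*(d/4)"
      by (simp_all add: left_diff_distrib right_diff_distrib)
    ultimately have "T (i+k+1) - d/4 \<le> tau * (T (i+k) - d/4)" by linarith
    also have "\<dots> \<le> tau * (tau^k * (T i - d/4))" using Suc tau0 by (intro mult_left_mono) auto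
    finally show ?case by simp
  qed
  have Tj: "T j > d/2" using tj TE[of j] cyc thr_eq by simp
  have Ti: "T i > d/2"
  proof (cases "i = j")
    case True then show ?thesis using Tj by simp
  next
    case False
    then have "i \<in> {i..<m}" using cyc by auto
    then have "t i > ereal (d/2)" using NULL by blast
    then show ?thesis using TE[of i] cyc by simp
  qed
  have main: "d/4 < tau^(j-i) * T i" if "j - i > 0"
  proof -
    have "T j - d/4 \<le> tau^(j-i) * (T i - d/4)" using CHAIN[of "j-i"] cyc by simp
    also have "\<dots> \<le> tau^(j-i) * T i" using tau0 d0 by (simp add: algebra_simps)
    finally show ?thesis using Tj by simp
  qed
  have "real (j - i) < (1+u) * ln (4 * T i / d)"
    by (rule final_arith[OF u0 tau_def d0 Ti main])
  then show ?thesis unfolding u_def T_def d_def by (simp add: algebra_simps)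
qed

end
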